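(* Let $IS\in\{\Box,\blacksquare\}^2$ and let $\tau$ be a correct compositional translation from $\mathrm{SYNCSIMPLE}$ into $\mathrm{LOCKSIMPLE}_{2,IS}$ of blocking type $(P_iP_i,P_jP_j)$ with $i,j\in\{1,2\}$. Then $i\neq j$.
   Context: $\mathrm{SYNCSIMPLE}$: subprocesses $\mathcal{U} ::= \checkmark \mid 0 \mid\, !\mathcal{U} \mid\, ?\mathcal{U}$; processes are finite parallel compositions $\mathcal{U}_1\mid\cdots\mid\mathcal{U}_n$ ($\mid$ associative, commutative, $0$ a unit). Reduction: $!\mathcal{U}_1\mid ?\mathcal{U}_2\mid \mathcal{P}\to \mathcal{U}_1\mid\mathcal{U}_2\mid\mathcal{P}$. Successful: of form $\checkmark\mid\mathcal{P}$; may-convergent: reduces to a successful process; must-convergent: every reachable process is may-convergent. $\mathrm{LOCKSIMPLE}_{k,IS}$ ($IS\in\{\Box,\blacksquare\}^k$, $\Box$ empty, $\blacksquare$ full): subprocesses are words over $\{P_1,T_1,\dots,P_k,T_k\}$ followed by $0$ or $\checkmark$; states $(\mathcal{P},C)$ reduce by $(P_i\mathcal{U}\mid\mathcal{P},C)\to(\mathcal{U}\mid\mathcal{P},C[C_i:=\blacksquare])$ only if $C_i=\Box$, and $(T_i\mathcal{U}\mid\mathcal{P},C)\to(\mathcal{U}\mid\mathcal{P},C[C_i:=\Box])$ always. Success = process contains $\checkmark$; a process $\mathcal{P}$ is may/must-convergent iff the state $(\mathcal{P},IS)$ is (defined as in SYNCSIMPLE). A compositional translation $\tau$ is given by words $\tau(!),\tau(?)$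 with $\tau(0)=0$, $\tau(\checkmark)=\checkmark$, $\tau(!\mathcal{U})=\tau(!)\tau(\mathcal{U})$, $\tau(?\mathcal{U})=\tau(?)\tau(\mathcal{U})$, $\tau$ commuting with $\mid$; correct = preserves and reflects may- and must-convergence. Blocking type: for a word $S$ over $\{P_i,T_i\}$, run $S$ as a single subprocess from store $IS$. If it gets stuck at an occurrence of $P_i$ (lock $i$ full), the prefix ending with that occurrence is the blocking prefix; if that occurrence is the first symbol of $\{P_i,T_i\}$ in $S$ (prefix of form $RP_i$, $R$ without $P_i,T_i$) the blocking type of $S$ is $P_i$, otherwise the blocking prefix has form $R_1P_iR_2P_i$ with $R_2$ containing no $P_i,T_i$ and the blocking type is $P_iP_i$. $\tau$ has blocking type $(W_1,W_2)$ if $W_1$ is the blocking type of $\tau(!)$ and $W_2$ that of $\tau(?)$. *)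

theory Defs
  imports Main "HOL-Library.Multiset"
begin

datatype ssub = SSucc | SNil | SSend ssub | SRecv ssub

type_synonym sproc = "ssub multiset"

definition sred :: "sproc \<Rightarrow> sproc \<Rightarrow> bool" where
  "sred P Q \<longleftrightarrow> (\<exists>U1 U2 R. P = {#SSend U1, SRecv U2#} + R \<and> Q = {#U1, U2#} + R)"

definition ssuccessful :: "sproc \<Rightarrow> bool" where
  "ssuccessful P \<longleftrightarrow> SSucc \<in># P"

definition smay :: "sproc \<Rightarrow> bool" where
  "smay P \<longleftrightarrow> (\<exists>Q. sred\<^sup>*\<^sup>* P Q \<and> ssuccessful Q)"

definition smust :: "sproc \<Rightarrow> bool" where
  "smust P \<longleftrightarrow> (\<forall>Q. sred\<^sup>*\<^sup>* P Q \<longrightarrow> smay Q)"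

datatype lsym = LP nat | LT nat

fun lidx :: "lsym \<Rightarrow> nat" where
  "lidx (LP i) = i" | "lidx (LT i) = i"

text \<open>A subprocess is a word followed by 0 (False) or the success symbol (True).
  A store maps lock indices to True (full) or False (empty).\<close>
type_synonym lsub = "lsym list \<times> bool"
type_synonym lproc = "lsub multiset"
type_synonym store = "nat \<Rightarrow> bool"

definition lred :: "lproc \<times> store \<Rightarrow> lproc \<times> store \<Rightarrow> bool" where
  "lred S S' \<longleftrightarrow> (\<exists>i w b R.
      (fst S = {#(LP i # w, b)#} + R \<and> \<not> snd S i \<and>
         S' = ({#(w, b)#} + R, (snd S)(i := True))) \<or>
      (fst S = {#(LT i # w, b)#} + R \<and>
         S' = ({#(w, b)#} + R, (snd S)(i := False))))"

definition lsuccessful :: "lproc \<times> store \<Rightarrow> bool" where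
  "lsuccessful S \<longleftrightarrow> ([], True) \<in># fst S"

definition lmay_state :: "lproc \<times> store \<Rightarrow> bool" where
  "lmay_state S \<longleftrightarrow> (\<exists>S'. lred\<^sup>*\<^sup>* S S' \<and> lsuccessful S')"

definition lmust_state :: "lproc \<times> store \<Rightarrow> bool" where
  "lmust_state S \<longleftrightarrow> (\<forall>S'. lred\<^sup>*\<^sup>* S S' \<longrightarrow> lmay_state S')"

definition lmay :: "store \<Rightarrow> lproc \<Rightarrow> bool" where
  "lmay IS P \<longleftrightarrow> lmay_state (P, IS)"

definition lmust :: "store \<Rightarrow> lproc \<Rightarrow> bool" where
  "lmust IS P \<longleftrightarrow> lmust_state (P, IS)"

text \<open>A compositional translation is given by the two words tau(!) = ws, tau(?) = wr.\<close>
fun trans_sub :: "lsym list \<Rightarrow> lsym list \<Rightarrow> ssub \<Rightarrow> lsub" where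
  "trans_sub ws wr SSucc = ([], True)"
| "trans_sub ws wr SNil = ([], False)"
| "trans_sub ws wr (SSend U) = (ws @ fst (trans_sub ws wr U), snd (trans_sub ws wr U))"
| "trans_sub ws wr (SRecv U) = (wr @ fst (trans_sub ws wr U), snd (trans_sub ws wr U))"

definition trans_proc :: "lsym list \<Rightarrow> lsym list \<Rightarrow> sproc \<Rightarrow> lproc" where
  "trans_proc ws wr P = image_mset (trans_sub ws wr) P"

definition valid_word :: "nat \<Rightarrow> lsym list \<Rightarrow> bool" where
  "valid_word k w \<longleftrightarrow> (\<forall>x\<in>set w. 1 \<le> lidx x \<and> lidx x \<le> k)"

definition correct_translation :: "nat \<Rightarrow> store \<Rightarrow> lsym list \<Rightarrow> lsym list \<Rightarrow> bool" where
  "correct_translation k IS ws wr \<longleftrightarrow> valid_word k ws \<and> valid_word k wr \<and>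
     (\<forall>P. smay P \<longleftrightarrow> lmay IS (trans_proc ws wr P)) \<and>
     (\<forall>P. smust P \<longleftrightarrow> lmust IS (trans_proc ws wr P))"

text \<open>Running a word as a single subprocess; None = stuck.\<close>
fun exec :: "store \<Rightarrow> lsym list \<Rightarrow> store option" where
  "exec C [] = Some C"
| "exec C (LP i # w) = (if C i then None else exec (C(i := True)) w)"
| "exec C (LT i # w) = exec (C(i := False)) w"

definition blocking_prefix :: "store \<Rightarrow> lsym list \<Rightarrow> lsym list \<Rightarrow> bool" where
  "blocking_prefix IS S bp \<longleftrightarrow> (\<exists>pre i C rest. bp = pre @ [LP i] \<and> S = bp @ rest \<and>
      exec IS pre = Some C \<and> C i)"

definition blocking_type_P :: "store \<Rightarrow> lsym list \<Rightarrow> nat \<Rightarrow> bool" where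
  "blocking_type_P IS S i \<longleftrightarrow> (\<exists>R. blocking_prefix IS S (R @ [LP i]) \<and>
      (\<forall>x\<in>set R. x \<noteq> LP i \<and> x \<noteq> LT i))"

definition blocking_type_PP :: "store \<Rightarrow> lsym list \<Rightarrow> nat \<Rightarrow> bool" where
  "blocking_type_PP IS S i \<longleftrightarrow> (\<exists>R1 R2. blocking_prefix IS S (R1 @ [LP i] @ R2 @ [LP i]) \<and>
      (\<forall>x\<in>set R2. x \<noteq> LP i \<and> x \<noteq> LT i))"

end

theory Submission
  imports Defs
begin

lemma exec_append: "exec C (u @ v) = (case exec C u of None \<Rightarrow> None | Some C'' \<Rightarrow> exec C'' v)"
proof (induction u arbitrary: C)
  case Nil then show ?case by simp
next
  case (Cons a u) then show ?case by (cases a) (simp_all add: fun_upd_def)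
qed

lemma exec_append_Some: "exec C (u @ v) = Some D \<Longrightarrow> \<exists>C''. exec C u = Some C'' \<and> exec C'' v = Some D"
  by (simp add: exec_append split: option.splits)

lemma exec_noop: "exec C w = Some C' \<Longrightarrow> (\<forall>x\<in>set w. lidx x \<noteq> k) \<Longrightarrow> C' k = C k"
proof (induction w arbitrary: C)
  case Nil then show ?case by simp
next
  case (Cons a w) then show ?case by (cases a) (auto split: if_splits)
qed

lemma exec_same: "exec C w = Some C' \<Longrightarrow> exec D w = Some D' \<Longrightarrow> (\<exists>x\<in>set w. lidx x = k) \<Longrightarrow> C' k = D' k"
proof (induction w arbitrary: C D)
  case Nil then show ?case by simp
next
  case (Cons a w)
  show ?case
  proof (cases "\<exists>x\<in>set w. lidx x = k")
    case True
    then show ?thesis using Cons by (cases a) (auto split: if_splits)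
  next
    case False
    then have ak: "lidx a = k" using Cons.prems(3) by auto
    show ?thesis
    proof (cases a)
      case (LP n)
      then show ?thesis using Cons.prems False ak exec_noop[of "C(n:=True)" w C' k] exec_noop[of "D(n:=True)" w D' k]
        by (auto split: if_splits)
    next
      case (LT n)
      then show ?thesis using Cons.prems False ak exec_noop[of "C(n:=False)" w C' k] exec_noop[of "D(n:=False)" w D' k]
        by (auto split: if_splits)
    qed
  qed
qed

lemma exec_mono: "exec C w = Some C' \<Longrightarrow> lidx ` set w \<subseteq> K \<Longrightarrow> (\<forall>k\<in>K. D k \<longrightarrow> C k)
  \<Longrightarrow> \<exists>D'. exec D w = Some D' \<and> (\<forall>k\<in>K. D' k \<longrightarrow> C' k)"
proof (induction w arbitrary: C D)
  case Nil then show ?case by simp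
next
  case (Cons a w)
  show ?case
  proof (cases a)
    case (LP n)
    have nK: "n \<in> K" using Cons.prems LP by auto
    have "\<not> C n" using Cons.prems(1) LP by (auto split: if_splits)
    then have "\<not> D n" using Cons.prems(3) nK by auto
    have e: "exec (C(n:=True)) w = Some C'" using Cons.prems(1) LP \<open>\<not> C n\<close> by simp
    have "\<forall>k\<in>K. (D(n:=True)) k \<longrightarrow> (C(n:=True)) k" using Cons.prems(3) by auto
    moreover have "lidx ` set w \<subseteq> K" using Cons.prems(2) by auto
    ultimately obtain D' where
      "exec (D(n:=True)) w = Some D' \<and> (\<forall>k\<in>K. D' k \<longrightarrow> C' k)" using Cons.IH[OF e] by blast
    then show ?thesis using LP \<open>\<not> D n\<close> by (metis exec.simps(2))
  next
    case (LT n)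
    have e: "exec (C(n:=False)) w = Some C'" using Cons.prems(1) LT by simp
    have "\<forall>k\<in>K. (D(n:=False)) k \<longrightarrow> (C(n:=False)) k" using Cons.prems(3) by auto
    moreover have "lidx ` set w \<subseteq> K" using Cons.prems(2) by auto
    ultimately obtain D' where
      "exec (D(n:=False)) w = Some D' \<and> (\<forall>k\<in>K. D' k \<longrightarrow> C' k)" using Cons.IH[OF e] by blast
    then show ?thesis using LT by (metis exec.simps(3))
  qed
qed

lemma exec_stuck: "(\<exists>C'. exec C w = Some C') \<or> (\<exists>p k y C2. w = p @ LP k # y \<and> exec C p = Some C2 \<and> C2 k)"
proof (induction w arbitrary: C)
  case Nil then show ?case by simp
next
  case (Cons a w)
  show ?case
  proof (cases a)
    case (LP n)
    show ?thesis
    proof (cases "C n")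
      case True
      then show ?thesis using LP by (intro disjI2 exI[of _ "[]"]) auto
    next
      case False
      from Cons.IH[of "C(n:=True)"] show ?thesis
      proof
        assume "\<exists>C'. exec (C(n:=True)) w = Some C'"
        then show ?thesis using LP False by auto
      next
        assume "\<exists>p k y C2. w = p @ LP k # y \<and> exec (C(n:=True)) p = Some C2 \<and> C2 k"
        then obtain p k y C2 where "w = p @ LP k # y" "exec (C(n:=True)) p = Some C2" "C2 k" by blast
        then show ?thesis using LP False by (intro disjI2 exI[of _ "a # p"]) auto
      qed
    qed
  next
    case (LT n)
    from Cons.IH[of "C(n:=False)"] show ?thesis
    proof
      assume "\<exists>C'. exec (C(n:=False)) w = Some C'"
      then show ?thesis using LT by auto
    next
      assume "\<exists>p k y C2. w = p @ LP k # y \<and> exec (C(n:=False)) p = Some C2 \<and> C2 k"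
      then obtain p k y C2 where "w = p @ LP k # y" "exec (C(n:=False)) p = Some C2" "C2 k" by blast
      then show ?thesis using LT by (intro disjI2 exI[of _ "a # p"]) auto
    qed
  qed
qed

lemma run: "exec C w = Some C' \<Longrightarrow> lred\<^sup>*\<^sup>* (add_mset (w @ x, b) R, C) (add_mset (x, b) R, C')"
proof (induction w arbitrary: C)
  case Nil then show ?case by simp
next
  case (Cons a w)
  show ?case
  proof (cases a)
    case (LP n)
    have nc: "\<not> C n" and e: "exec (C(n:=True)) w = Some C'" using Cons.prems LP by (auto split: if_splits)
    have "lred (add_mset (a # w @ x, b) R, C) (add_mset (w @ x, b) R, C(n:=True))"
      unfolding lred_def using LP nc by (intro exI[of _ n] exI[of _ "w @ x"] exI[of _ b] exI[of _ R]) simp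
    then show ?thesis unfolding append_Cons by (rule converse_rtranclp_into_rtranclp[OF _ Cons.IH[OF e]])
  next
    case (LT n)
    have e: "exec (C(n:=False)) w = Some C'" using Cons.prems LT by auto
    have "lred (add_mset (a # w @ x, b) R, C) (add_mset (w @ x, b) R, C(n:=False))"
      unfolding lred_def using LT by (intro exI[of _ n] exI[of _ "w @ x"] exI[of _ b] exI[of _ R]) simp
    then show ?thesis unfolding append_Cons by (rule converse_rtranclp_into_rtranclp[OF _ Cons.IH[OF e]])
  qed
qed

lemma dead_nored: "C k1 \<Longrightarrow> C k2 \<Longrightarrow> \<not> lred ({#(LP k1 # x1, b1), (LP k2 # x2, b2)#}, C) S'"
proof
  assume h: "C k1" "C k2" "lred ({#(LP k1 # x1, b1), (LP k2 # x2, b2)#}, C) S'"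
  then obtain i w b R where
    "({#(LP k1 # x1, b1), (LP k2 # x2, b2)#} = {#(LP i # w, b)#} + R \<and> \<not> C i) \<or>
     ({#(LP k1 # x1, b1), (LP k2 # x2, b2)#} = {#(LT i # w, b)#} + R)"
    unfolding lred_def by auto
  then show False
  proof
    assume a: "{#(LP k1 # x1, b1), (LP k2 # x2, b2)#} = {#(LP i # w, b)#} + R \<and> \<not> C i"
    then have "(LP i # w, b) \<in># {#(LP k1 # x1, b1), (LP k2 # x2, b2)#}" by simp
    then have "i = k1 \<or> i = k2" by auto
    then show False using a h by auto
  next
    assume a: "{#(LP k1 # x1, b1), (LP k2 # x2, b2)#} = {#(LT i # w, b)#} + R"
    then have "(LT i # w, b) \<in># {#(LP k1 # x1, b1), (LP k2 # x2, b2)#}" by simp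
    then show False by auto
  qed
qed

lemma dead: "C k1 \<Longrightarrow> C k2 \<Longrightarrow> \<not> lmay_state ({#(LP k1 # x1, b1), (LP k2 # x2, b2)#}, C)"
proof
  assume h: "C k1" "C k2" "lmay_state ({#(LP k1 # x1, b1), (LP k2 # x2, b2)#}, C)"
  then obtain S' where r: "lred\<^sup>*\<^sup>* ({#(LP k1 # x1, b1), (LP k2 # x2, b2)#}, C) S'" and s: "lsuccessful S'"
    unfolding lmay_state_def by blast
  from r have "S' = ({#(LP k1 # x1, b1), (LP k2 # x2, b2)#}, C)"
    by (cases rule: converse_rtranclpE) (use dead_nored[OF h(1,2)] in blast)+
  then show False using s unfolding lsuccessful_def by auto
qed

lemma smust_ex: "smust {#SSend SSucc, SRecv SSucc#}"
proof -
  let ?P = "{#SSend SSucc, SRecv SSucc#}"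
  let ?Q = "{#SSucc, SSucc#} :: sproc"
  have nQ: "\<not> sred ?Q X" for X
    unfolding sred_def
  proof
    assume "\<exists>U1 U2 R. ?Q = {#SSend U1, SRecv U2#} + R \<and> X = {#U1, U2#} + R"
    then obtain U1 U2 R where "?Q = {#SSend U1, SRecv U2#} + R" by blast
    then have "SSend U1 \<in># ?Q" by (metis add_mset_add_single union_iff multi_member_this union_commute)
    then show False by simp
  qed
  have PQ: "sred ?P X \<Longrightarrow> X = ?Q" for X
    unfolding sred_def
  proof -
    assume "\<exists>U1 U2 R. ?P = {#SSend U1, SRecv U2#} + R \<and> X = {#U1, U2#} + R"
    then obtain U1 U2 R where a: "?P = {#SSend U1, SRecv U2#} + R" "X = {#U1, U2#} + R" by blast
    from a(1) have "size R = 0" by (metis add_cancel_right_right size_eq_0_iff_empty size_union size_add_mset size_single size_empty)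
    then have "R = {#}" by simp
    with a(1) have "{#SSend SSucc, SRecv SSucc#} = {#SSend U1, SRecv U2#}" by simp
    then have "SSend U1 \<in># {#SSend SSucc, SRecv SSucc#}" "SRecv U2 \<in># {#SSend SSucc, SRecv SSucc#}"
      by (metis add_mset_commute union_single_eq_member)+
    then have "U1 = SSucc \<and> U2 = SSucc" by auto
    then show "X = ?Q" using a \<open>R = {#}\<close> by simp
  qed
  have inv: "sred\<^sup>*\<^sup>* ?P X \<Longrightarrow> X = ?P \<or> X = ?Q" for X
  proof (induction rule: rtranclp_induct)
    case base then show ?case by simp
  next
    case (step y z) then show ?case using PQ nQ by blast
  qed
  have mQ: "smay ?Q" unfolding smay_def ssuccessful_def by auto
  have "sred ?P ?Q" unfolding sred_def by (intro exI[of _ SSucc] exI[of _ SSucc] exI[of _ "{#}"]) simp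
  then have mP: "smay ?P" using mQ unfolding smay_def by (meson converse_rtranclp_into_rtranclp)
  show ?thesis unfolding smust_def using inv mP mQ by blast
qed

lemma unpack_PP:
  assumes "blocking_type_PP IS w i"
  shows "\<exists>pa ra Ca. w = pa @ LP i # ra \<and> exec IS pa = Some Ca \<and> Ca i \<and> LP i \<in> set pa"
proof -
  obtain R1 R2 where "blocking_prefix IS w (R1 @ [LP i] @ R2 @ [LP i])"
    using assms unfolding blocking_type_PP_def by blast
  then obtain pre i' C rest where h: "R1 @ [LP i] @ R2 @ [LP i] = pre @ [LP i']" "w = (R1 @ [LP i] @ R2 @ [LP i]) @ rest"
    "exec IS pre = Some C" "C i'" unfolding blocking_prefix_def by blast
  from h(1) have "pre = R1 @ [LP i] @ R2" "i' = i"
    by (metis append.assoc append1_eq_conv lsym.inject(1))+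
  then show ?thesis using h by (intro exI[of _ pre] exI[of _ rest] exI[of _ C]) auto
qed

lemma valid_sub: "valid_word 2 w \<Longrightarrow> set u \<subseteq> set w \<Longrightarrow> lidx ` set u \<subseteq> {1,2}"
  unfolding valid_word_def by force

lemma sched1:
  assumes va: "valid_word 2 a" and vb: "valid_word 2 b" and i: "i \<in> {1,2}"
   and a: "a = pa @ LP i # ra" "exec IS pa = Some Ca" "Ca i" "LP i \<in> set pa"
   and b: "b = pb @ LP i # rb" "exec IS pb = Some Cb" "Cb i" "LP i \<in> set pb"
  shows "(\<exists>S. lred\<^sup>*\<^sup>* ({#(a,True),(b,True)#}, IS) S \<and> \<not> lmay_state S) \<or>
    (\<exists>p z C2. pb = p @ LP (3-i) # z \<and> exec Ca p = Some C2 \<and> \<not> C2 i \<and> Ca (3-i) \<and>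
       (\<exists>x\<in>set p. lidx x = i) \<and> (\<forall>x\<in>set p. lidx x \<noteq> 3-i))"
proof -
  have ipb: "\<exists>x\<in>set pb. lidx x = i" using b(4) by force
  have L4: "exec D' (LP i # t) = None" if "exec D pb = Some D'" for D D' t
  proof -
    have "D' i = Cb i" using exec_same[OF that b(2) ipb] .
    then show ?thesis using b(3) by simp
  qed
  from exec_stuck[of Ca b] show ?thesis
  proof
    assume "\<exists>C'. exec Ca b = Some C'"
    then obtain C' where "exec Ca (pb @ LP i # rb) = Some C'" using b(1) by blast
    then obtain D' where "exec Ca pb = Some D'" "exec D' (LP i # rb) = Some C'"
      using exec_append_Some by blast
    then show ?thesis using L4 by simp
  next
    assume "\<exists>p k y C2. b = p @ LP k # y \<and> exec Ca p = Some C2 \<and> C2 k"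
    then obtain p k y C2 where p: "b = p @ LP k # y" "exec Ca p = Some C2" "C2 k" by blast
    show ?thesis
    proof (cases "C2 i")
      case True
      have r1: "lred\<^sup>*\<^sup>* (add_mset (pa @ LP i # ra, True) {#(b,True)#}, IS) (add_mset (LP i # ra, True) {#(b,True)#}, Ca)"
        using run[OF a(2)] by simp
      have r2: "lred\<^sup>*\<^sup>* (add_mset (p @ LP k # y, True) {#(LP i # ra,True)#}, Ca) (add_mset (LP k # y, True) {#(LP i # ra,True)#}, C2)"
        using run[OF p(2)] by simp
      have s1: "lred\<^sup>*\<^sup>* ({#(a,True),(b,True)#}, IS) ({#(LP i # ra, True), (b, True)#}, Ca)"
        using r1 a(1) by simp
      have s2: "lred\<^sup>*\<^sup>* ({#(LP i # ra, True), (b, True)#}, Ca) ({#(LP i # ra, True), (LP k # y, True)#}, C2)"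
        using r2 p(1) by (simp add: add_mset_commute)
      have "lred\<^sup>*\<^sup>* ({#(a,True),(b,True)#}, IS) ({#(LP i # ra, True), (LP k # y, True)#}, C2)"
        using rtranclp_trans[OF s1 s2] .
      moreover have "\<not> lmay_state ({#(LP i # ra, True), (LP k # y, True)#}, C2)"
        using dead True p(3) by blast
      ultimately show ?thesis by blast
    next
      case False
      have ki: "k \<noteq> i" using False p(3) by auto
      have "lidx (LP k) \<in> {1,2}" using valid_sub[OF vb, of "[LP k]"] p(1) by auto
      then have ko: "k = 3 - i" using i ki by auto
      have ip: "\<exists>x\<in>set p. lidx x = i"
      proof (rule ccontr)
        assume "\<not> ?thesis"
        then have "C2 i = Ca i" using exec_noop[OF p(2)] by blast
        then show False using False a(3) by simp
      qed
      have eq: "p @ LP k # y = pb @ LP i # rb" using p(1) b(1) by simp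
      then obtain us where us: "(p = pb @ us \<and> us @ LP k # y = LP i # rb) \<or> (p @ us = pb \<and> LP k # y = us @ LP i # rb)"
        unfolding append_eq_append_conv2 by blast
      then obtain z where z: "pb = p @ LP k # z"
      proof
        assume h: "p = pb @ us \<and> us @ LP k # y = LP i # rb"
        show ?thesis
        proof (cases us)
          case Nil then show ?thesis using h ki by simp
        next
          case (Cons u t)
          then have "p = pb @ LP i # t" using h by simp
          then have "exec Ca (pb @ LP i # t) = Some C2" using p(2) by simp
          from exec_append_Some[OF this] obtain D' where "exec Ca pb = Some D'" "exec D' (LP i # t) = Some C2"
            by blast
          then show ?thesis using L4 by simp
        qed
      next
        assume h: "p @ us = pb \<and> LP k # y = us @ LP i # rb"
        show ?thesis
        proof (cases us)
          case Nil then show ?thesis using h ki by simp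
        next
          case (Cons u t)
          then have "pb = p @ LP k # t" using h by simp
          then show ?thesis by (rule that)
        qed
      qed
      obtain E where E: "exec IS p = Some E" "exec E (LP k # z) = Some Cb"
        using b(2) z exec_append_Some by blast
      have nEk: "\<not> E k" using E(2) by (cases "E k") simp_all
      have nok: "\<forall>x\<in>set p. lidx x \<noteq> k"
      proof (rule ccontr)
        assume "\<not> ?thesis"
        then have "E k = C2 k" using exec_same[OF E(1) p(2)] by blast
        then show False using nEk p(3) by simp
      qed
      have "Ca k" using exec_noop[OF p(2) nok] p(3) by simp
      then show ?thesis using z p(2) False ip nok ko by blast
    qed
  qed
qed

theorem proposition5p1:
  fixes IS :: store and ws wr :: "lsym list" and i j :: nat
  assumes "correct_translation 2 IS ws wr"
    and "i \<in> {1, 2}" and "j \<in> {1, 2}"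
    and "blocking_type_PP IS ws i"
    and "blocking_type_PP IS wr j"
  shows "i \<noteq> j"
proof
  assume ij: "i = j"
  have va: "valid_word 2 ws" and vb: "valid_word 2 wr"
    and must: "smust {#SSend SSucc, SRecv SSucc#} = lmust IS (trans_proc ws wr {#SSend SSucc, SRecv SSucc#})"
    using assms(1) unfolding correct_translation_def by blast+
  have tp: "trans_proc ws wr {#SSend SSucc, SRecv SSucc#} = {#(ws,True),(wr,True)#}"
    unfolding trans_proc_def by simp
  have notdead: "\<not> (\<exists>S. lred\<^sup>*\<^sup>* ({#(ws,True),(wr,True)#}, IS) S \<and> \<not> lmay_state S)"
    using must smust_ex tp unfolding lmust_def lmust_state_def by auto
  have i: "i \<in> {1,2}" using assms(2) .
  obtain pa ra Ca where A: "ws = pa @ LP i # ra" "exec IS pa = Some Ca" "Ca i" "LP i \<in> set pa"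
    using unpack_PP[OF assms(4)] by blast
  obtain pb rb Cb where B: "wr = pb @ LP i # rb" "exec IS pb = Some Cb" "Cb i" "LP i \<in> set pb"
    using unpack_PP[OF assms(5)] ij by blast
  define l where "l = 3 - i"
  have oi: "l \<noteq> i" and K: "\<And>k. k \<in> {1,2} \<Longrightarrow> k = i \<or> k = l" "l \<in> {1,2}"
    using i unfolding l_def by auto
  have swap: "{#(wr,True),(ws,True)#} = {#(ws,True),(wr,True)#}" by (simp add: add_mset_commute)
  from sched1[OF va vb i A B, folded l_def] notdead obtain p z C2 where
    F1: "pb = p @ LP l # z" "exec Ca p = Some C2" "\<not> C2 i" "Ca l" "\<exists>x\<in>set p. lidx x = i" "\<forall>x\<in>set p. lidx x \<noteq> l"
    by blast
  from sched1[OF vb va i B A, folded l_def, unfolded swap] notdead obtain q z' D2 where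
    F2: "pa = q @ LP l # z'" "exec Cb q = Some D2" "\<not> D2 i" "Cb l" "\<exists>x\<in>set q. lidx x = i" "\<forall>x\<in>set q. lidx x \<noteq> l"
    by blast
  obtain E1 where E1: "exec IS q = Some E1" "exec E1 (LP l # z') = Some Ca"
    using A(2) F2(1) exec_append_Some by blast
  have nE1o: "\<not> E1 l" using E1(2) by (cases "E1 l") simp_all
  have G: "exec (E1(l:=True)) z' = Some Ca" using E1(2) nE1o by (metis exec.simps(2))
  have nE1i: "\<not> E1 i" using exec_same[OF E1(1) F2(2) F2(5)] F2(3) by simp
  obtain E where E: "exec IS p = Some E" "exec E (LP l # z) = Some Cb"
    using B(2) F1(1) exec_append_Some by blast
  have nEo: "\<not> E l" using E(2) by (cases "E l") simp_all
  have "set p \<subseteq> set wr" using B(1) F1(1) by auto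
  note vp = valid_sub[OF vb this]
  have "\<forall>k\<in>{1,2}. E1 k \<longrightarrow> IS k"
  proof (intro ballI impI)
    fix k assume "k \<in> {1,2}" "E1 k"
    then show "IS k" using K(1)[of k] nE1i nE1o by auto
  qed
  from exec_mono[OF E(1) vp this] obtain E2 where E2: "exec E1 p = Some E2" "\<forall>k\<in>{1,2}. E2 k \<longrightarrow> E k"
    by blast
  have nE2o: "\<not> E2 l" using bspec[OF E2(2) K(2)] nEo by blast
  have nE2i: "\<not> E2 i" using exec_same[OF E2(1) F1(2) F1(5)] F1(3) by simp
  define H where "H = E2(l:=True)"
  have "set z' \<subseteq> set ws" using A(1) F2(1) by auto
  note vz = valid_sub[OF va this]
  have "\<forall>k\<in>{1,2}. H k \<longrightarrow> (E1(l:=True)) k"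
  proof (intro ballI impI)
    fix k assume "k \<in> {1,2}" "H k"
    then show "(E1(l:=True)) k" using K(1)[of k] nE2i oi unfolding H_def by auto
  qed
  from exec_mono[OF G vz this] obtain H' where H': "exec H z' = Some H'" by blast
  have iz: "\<exists>x\<in>set z'. lidx x = i"
  proof (rule ccontr)
    assume "\<not> ?thesis"
    then have "Ca i = (E1(l:=True)) i" using exec_noop[OF G] by blast
    then show False using nE1i oi A(3) by simp
  qed
  have H'i: "H' i" using exec_same[OF H' G iz] A(3) by simp
  have H'l: "H' l"
  proof (cases "\<exists>x\<in>set z'. lidx x = l")
    case True then show ?thesis using exec_same[OF H' G True] F1(4) by simp
  next
    case False then show ?thesis using exec_noop[OF H'] unfolding H_def by simp
  qed
  have st3: "exec E2 (LP l # z') = Some H'" using H' nE2o unfolding H_def by (metis exec.simps(2))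
  have r1: "lred\<^sup>*\<^sup>* (add_mset (q @ (LP l # z' @ LP i # ra), True) {#(wr,True)#}, IS)
                      (add_mset (LP l # z' @ LP i # ra, True) {#(wr,True)#}, E1)"
    by (rule run[OF E1(1)])
  have r2: "lred\<^sup>*\<^sup>* (add_mset (p @ (LP l # z @ LP i # rb), True) {#(LP l # z' @ LP i # ra, True)#}, E1)
                      (add_mset (LP l # z @ LP i # rb, True) {#(LP l # z' @ LP i # ra, True)#}, E2)"
    by (rule run[OF E2(1)])
  have r3: "lred\<^sup>*\<^sup>* (add_mset ((LP l # z') @ (LP i # ra), True) {#(LP l # z @ LP i # rb, True)#}, E2)
                      (add_mset (LP i # ra, True) {#(LP l # z @ LP i # rb, True)#}, H')"
    by (rule run[OF st3])
  have wsq: "ws = q @ (LP l # z' @ LP i # ra)" and wrp: "wr = p @ (LP l # z @ LP i # rb)"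
    using A(1) F2(1) B(1) F1(1) by simp_all
  have s1: "lred\<^sup>*\<^sup>* ({#(ws,True),(wr,True)#}, IS) ({#(LP l # z' @ LP i # ra, True),(wr,True)#}, E1)"
    using r1 wsq by simp
  have s2: "lred\<^sup>*\<^sup>* ({#(LP l # z' @ LP i # ra, True),(wr,True)#}, E1) ({#(LP l # z' @ LP i # ra, True),(LP l # z @ LP i # rb, True)#}, E2)"
    using r2 wrp by (simp add: add_mset_commute)
  have s3: "lred\<^sup>*\<^sup>* ({#(LP l # z' @ LP i # ra, True),(LP l # z @ LP i # rb, True)#}, E2) ({#(LP i # ra, True), (LP l # z @ LP i # rb, True)#}, H')"
    using r3 by simp
  have "lred\<^sup>*\<^sup>* ({#(ws,True),(wr,True)#}, IS) ({#(LP i # ra, True), (LP l # z @ LP i # rb, True)#}, H')"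
    using rtranclp_trans[OF rtranclp_trans[OF s1 s2] s3] .
  moreover have "\<not> lmay_state ({#(LP i # ra, True), (LP l # z @ LP i # rb, True)#}, H')"
    using dead H'i H'l by blast
  ultimately show False using notdead by blast
qed

end
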